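(* In the algebra $\mathcal O_q$ defined in the context, with $B_\delta=q^{-2}\mathcal W_1\mathcal W_0-\mathcal W_0\mathcal W_1$, the following hold for all $k\in\mathbb N$: (i) $[\tilde{\mathcal G}_{k+1},\mathcal W_0]_q=(q-q^{-1})\mathcal W_0\tilde{\mathcal G}_{k+1}-q^2[B_\delta,\mathcal W_{-k}]$; (ii) $[\mathcal W_1,\tilde{\mathcal G}_{k+1}]_q=(q-q^{-1})\mathcal W_1\tilde{\mathcal G}_{k+1}+[B_\delta,\mathcal W_{k+1}]$.
   Context: All algebras are associative and unital over a field $\mathbb F$; $q\in\mathbb F$ is nonzero and not a root of unity. For elements $X,Y$ of an algebra, $[X,Y]=XY-YX$ and $[X,Y]_q=qXY-q^{-1}YX$. Let $\rho=-(q^2-q^{-2})^2$. The algebra $\mathcal O_q$ is defined by generators $\mathcal W_{-k},\mathcal W_{k+1},\mathcal G_{k+1},\tilde{\mathcal G}_{k+1}$ ($k\in\mathbb N$) and the following relations for all $k,\ell\in\mathbb N$: $[\mathcal W_0,\mathcal W_{k+1}]=[\mathcal W_{-k},\mathcal W_1]=(\tilde{\mathcal G}_{k+1}-\mathcal G_{k+1})/(q+q^{-1})$; $[\mathcal W_0,\mathcal G_{k+1}]_q=[\tilde{\mathcal G}_{k+1},\mathcal W_0]_q=\rho\mathcal W_{-k-1}-\rho\mathcal W_{k+1}$; $[\mathcal G_{k+1},\mathcal W_1]_q=[\mathcal W_1,\tilde{\mathcal G}_{k+1}]_q=\rho\mathcal W_{k+2}-\rho\mathcal W_{-k}$; $[\mathcal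 W_{-k},\mathcal W_{-\ell}]=0$, $[\mathcal W_{k+1},\mathcal W_{\ell+1}]=0$; $[\mathcal W_{-k},\mathcal W_{\ell+1}]+[\mathcal W_{k+1},\mathcal W_{-\ell}]=0$; $[\mathcal W_{-k},\mathcal G_{\ell+1}]+[\mathcal G_{k+1},\mathcal W_{-\ell}]=0$; $[\mathcal W_{-k},\tilde{\mathcal G}_{\ell+1}]+[\tilde{\mathcal G}_{k+1},\mathcal W_{-\ell}]=0$; $[\mathcal W_{k+1},\mathcal G_{\ell+1}]+[\mathcal G_{k+1},\mathcal W_{\ell+1}]=0$; $[\mathcal W_{k+1},\tilde{\mathcal G}_{\ell+1}]+[\tilde{\mathcal G}_{k+1},\mathcal W_{\ell+1}]=0$; $[\mathcal G_{k+1},\mathcal G_{\ell+1}]=0$, $[\tilde{\mathcal G}_{k+1},\tilde{\mathcal G}_{\ell+1}]=0$; $[\tilde{\mathcal G}_{k+1},\mathcal G_{\ell+1}]+[\mathcal G_{k+1},\tilde{\mathcal G}_{\ell+1}]=0$. *)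

theory Defs
  imports Main
begin

text \<open>A unital associative algebra over a field 'f is modelled as a ring 'a together with
 a unital ring homomorphism emb from 'f into the centre of 'a (scalar c acts as emb c * _).\<close>

definition is_algebra_emb :: "('f::field \<Rightarrow> 'a::ring_1) \<Rightarrow> bool" where
  "is_algebra_emb emb \<longleftrightarrow>
     emb 1 = 1 \<and> (\<forall>x y. emb (x + y) = emb x + emb y) \<and> (\<forall>x y. emb (x * y) = emb x * emb y)
     \<and> (\<forall>c X. emb c * X = X * emb c)"

definition comm :: "'a::ring \<Rightarrow> 'a \<Rightarrow> 'a" where
  "comm X Y = X * Y - Y * X"

definition qcomm :: "('f::field \<Rightarrow> 'a::ring_1) \<Rightarrow> 'f \<Rightarrow> 'a \<Rightarrow> 'a \<Rightarrow> 'a" where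
  "qcomm emb q X Y = emb q * X * Y - emb (inverse q) * Y * X"

definition rho :: "'f::field \<Rightarrow> 'f" where
  "rho q = - ((q^2 - inverse q ^ 2)^2)"

text \<open>Indexing: Wm k = W_{-k}, Wp k = W_{k+1}, G k = G_{k+1}, Gt k = tilde G_{k+1}.
 Oq_rels says these elements satisfy all defining relations of O_q.\<close>

definition Oq_rels :: "('f::field \<Rightarrow> 'a::ring_1) \<Rightarrow> 'f \<Rightarrow> (nat \<Rightarrow> 'a) \<Rightarrow> (nat \<Rightarrow> 'a)
    \<Rightarrow> (nat \<Rightarrow> 'a) \<Rightarrow> (nat \<Rightarrow> 'a) \<Rightarrow> bool" where
  "Oq_rels emb q Wm Wp G Gt \<longleftrightarrow>
    (\<forall>k l.
      comm (Wm 0) (Wp k) = emb (inverse (q + inverse q)) * (Gt k - G k) \<and>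
      comm (Wm k) (Wp 0) = emb (inverse (q + inverse q)) * (Gt k - G k) \<and>
      qcomm emb q (Wm 0) (G k) = emb (rho q) * Wm (Suc k) - emb (rho q) * Wp k \<and>
      qcomm emb q (Gt k) (Wm 0) = emb (rho q) * Wm (Suc k) - emb (rho q) * Wp k \<and>
      qcomm emb q (G k) (Wp 0) = emb (rho q) * Wp (Suc k) - emb (rho q) * Wm k \<and>
      qcomm emb q (Wp 0) (Gt k) = emb (rho q) * Wp (Suc k) - emb (rho q) * Wm k \<and>
      comm (Wm k) (Wm l) = 0 \<and> comm (Wp k) (Wp l) = 0 \<and>
      comm (Wm k) (Wp l) + comm (Wp k) (Wm l) = 0 \<and>
      comm (Wm k) (G l) + comm (G k) (Wm l) = 0 \<and>
      comm (Wm k) (Gt l) + comm (Gt k) (Wm l) = 0 \<and>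
      comm (Wp k) (G l) + comm (G k) (Wp l) = 0 \<and>
      comm (Wp k) (Gt l) + comm (Gt k) (Wp l) = 0 \<and>
      comm (G k) (G l) = 0 \<and> comm (Gt k) (Gt l) = 0 \<and>
      comm (Gt k) (G l) + comm (G k) (Gt l) = 0)"

end

theory Submission
  imports Defs
begin

context fixes emb :: "'f::field \<Rightarrow> 'a::ring_1" assumes E: "is_algebra_emb emb"
begin
lemma e1: "emb 1 = 1" using E unfolding is_algebra_emb_def by (elim conjE)
lemma eadd: "emb (x+y) = emb x + emb y" using E unfolding is_algebra_emb_def by (elim conjE allE)
lemma emul: "emb (x*y) = emb x * emb y" using E unfolding is_algebra_emb_def by (elim conjE allE)
lemma ecen: "emb c * X = X * emb c" using E unfolding is_algebra_emb_def by (elim conjE allE)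
lemma e0: "emb 0 = 0" using eadd[of 0 0] by simp
lemma eminus: "emb (-x) = - emb x"
proof -
  have "emb x + emb (-x) = 0" using eadd[of x "-x"] e0 by simp
  then have "- emb x = emb (-x)" by (rule minus_unique)
  then show ?thesis by simp
qed
lemma ediff: "emb (x-y) = emb x - emb y" using eadd[of x "-y"] eminus by simp
lemma cen2: "X * (emb c * Y) = emb c * (X * Y)"
  by (simp only: mult.assoc[symmetric] ecen[of c X, symmetric])
lemma cen1: "X * emb c = emb c * X" by (rule ecen[symmetric])
lemma comb: "emb c * (emb d * Y) = emb (c*d) * Y" by (simp add: emul mult.assoc)
end

theorem lemma11p4:
  fixes emb :: "'f::field \<Rightarrow> 'a::ring_1" and q :: 'f
    and Wm Wp G Gt :: "nat \<Rightarrow> 'a" and k :: nat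
  assumes "is_algebra_emb emb"
    and "q \<noteq> 0" and "\<forall>n::nat. n > 0 \<longrightarrow> q ^ n \<noteq> 1"
    and "Oq_rels emb q Wm Wp G Gt"
  defines "Bd \<equiv> emb (inverse q ^ 2) * Wp 0 * Wm 0 - Wm 0 * Wp 0"
  shows "qcomm emb q (Gt k) (Wm 0)
           = emb (q - inverse q) * Wm 0 * Gt k - emb (q ^ 2) * comm Bd (Wm k)
         \<and> qcomm emb q (Wp 0) (Gt k)
           = emb (q - inverse q) * Wp 0 * Gt k + comm Bd (Wp k)"
proof -
  note E = assms(1)
  define s where "s = q + inverse q"
  define c where "c = inverse s"
  have s0: "s \<noteq> 0"
  proof
    assume "s = 0"
    hence "q * s = 0" by simp
    hence "1 + q*q = 0" using assms(2) unfolding s_def by (simp add: algebra_simps)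
    hence "q*q = -1" by (metis add.commute add_eq_0_iff)
    moreover have "q^4 = (q*q)*(q*q)" by algebra
    ultimately have "q^4 = 1" by simp
    thus False using assms(3) by auto
  qed
  have cs: "emb c * emb s = 1" "emb s * emb c = 1"
    using s0 e1[OF E] emul[OF E, of c s, symmetric] emul[OF E, of s c, symmetric] unfolding c_def by auto
  have R: "\<And>k l. comm (Wm 0) (Wp k) = emb c * (Gt k - G k) \<and>
      comm (Wm k) (Wp 0) = emb c * (Gt k - G k) \<and>
      qcomm emb q (Wm 0) (G k) = qcomm emb q (Gt k) (Wm 0) \<and>
      qcomm emb q (G k) (Wp 0) = qcomm emb q (Wp 0) (Gt k) \<and>
      comm (Wm k) (Wm l) = 0 \<and> comm (Wp k) (Wp l) = 0"
  proof -
    fix k l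
    note O = assms(4)[unfolded Oq_rels_def, rule_format, of k l]
    show "?thesis k l" using O unfolding c_def s_def by auto
  qed
  define X where "X = Wm k * Wp 0 - Wp 0 * Wm k"
  define Y where "Y = Wm 0 * Wp k - Wp k * Wm 0"
  have X: "emb s * X = Gt k - G k"
  proof -
    have "X = emb c * (Gt k - G k)" using R[of k] unfolding X_def comm_def by blast
    hence "emb s * X = (emb s * emb c) * (Gt k - G k)" by (simp add: mult.assoc)
    thus ?thesis using cs by simp
  qed
  have Y: "emb s * Y = Gt k - G k"
  proof -
    have "Y = emb c * (Gt k - G k)" using R[of k] unfolding Y_def comm_def by blast
    hence "emb s * Y = (emb s * emb c) * (Gt k - G k)" by (simp add: mult.assoc)
    thus ?thesis using cs by simp
  qed
  have c0k: "Wm 0 * Wm k = Wm k * Wm 0" using R[of 0 k] unfolding comm_def by simp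
  have c0kp: "Wp 0 * Wp k = Wp k * Wp 0" using R[of 0 k] unfolding comm_def by simp
  have B1: "comm Bd (Wm k) = Wm 0 * X - emb (inverse q ^ 2) * (X * Wm 0)"
  proof -
    have a: "Wm 0 * (Wm k * Z) = Wm k * (Wm 0 * Z)" for Z by (metis c0k mult.assoc)
    show ?thesis unfolding Bd_def comm_def X_def
      by (simp only: left_diff_distrib right_diff_distrib mult.assoc cen2[OF E] a c0k) (simp add: algebra_simps)
  qed
  have B2: "comm Bd (Wp k) = emb (inverse q ^ 2) * (Wp 0 * Y) - Y * Wp 0"
  proof -
    have a: "Wp 0 * (Wp k * Z) = Wp k * (Wp 0 * Z)" for Z by (metis c0kp mult.assoc)
    show ?thesis unfolding Bd_def comm_def Y_def
      by (simp only: left_diff_distrib right_diff_distrib mult.assoc cen2[OF E] a c0kp) (simp add: algebra_simps)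
  qed
  have canc: "\<And>A B. emb s * A = emb s * B \<Longrightarrow> A = B"
  proof -
    fix A B assume h: "emb s * A = emb s * B"
    have "A = (emb c * emb s) * A" using cs by simp
    also have "\<dots> = emb c * (emb s * B)" using h by (simp add: mult.assoc)
    also have "\<dots> = B" using cs by (simp add: mult.assoc[symmetric])
    finally show "A = B" .
  qed
  have qq: "emb q * emb (inverse q) = 1" "emb (q^2) * emb (inverse q ^ 2) = 1"
    using emul[OF E, of q "inverse q", symmetric] emul[OF E, of "q^2" "inverse q ^ 2", symmetric]
      e1[OF E] assms(2) by (simp_all add: power_mult_distrib[symmetric])
  have qq': "emb (inverse q) * emb q = 1" "emb (inverse q ^ 2) * emb (q^2) = 1"
    using emul[OF E, of "inverse q" q, symmetric] emul[OF E, of "inverse q ^ 2" "q^2", symmetric]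
      e1[OF E] assms(2) by (simp_all add: power_mult_distrib[symmetric])
  have Rq: "emb (q^2) * (Wm 0 * G k) - G k * Wm 0 = emb (q^2) * (Gt k * Wm 0) - Wm 0 * Gt k"
  proof -
    have "emb q * (qcomm emb q (Wm 0) (G k)) = emb q * (qcomm emb q (Gt k) (Wm 0))"
      using R[of k] by simp
    thus ?thesis unfolding qcomm_def
      by (simp add: right_diff_distrib mult.assoc comb[OF E] power2_eq_square assms(2) e1[OF E])
  qed
  have Rq2: "G k * Wp 0 - emb (inverse q ^ 2) * (Wp 0 * G k) = Wp 0 * Gt k - emb (inverse q ^ 2) * (Gt k * Wp 0)"
  proof -
    have "emb (inverse q) * (qcomm emb q (G k) (Wp 0)) = emb (inverse q) * (qcomm emb q (Wp 0) (Gt k))"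
      using R[of k] by simp
    thus ?thesis unfolding qcomm_def
      by (simp add: right_diff_distrib mult.assoc comb[OF E] power2_eq_square assms(2) e1[OF E])
  qed
  have iq: "(inverse q)^2 * q^2 = 1" "q^2 * (inverse q)^2 = 1"
    using assms(2) by (simp_all add: power_mult_distrib[symmetric])
  have g1: "s*q = q^2 + 1" "s*(q - inverse q) = (q^2 + 1) - s * inverse q"
    "s * inverse q = inverse q ^ 2 + 1" "s*q = s*(q - inverse q) + inverse q ^ 2 + 1"
    using assms(2) by (simp_all add: s_def field_simps power2_eq_square)
  have f1: "emb (s*q) = emb (q^2) + 1" "emb (s*(q - inverse q)) = emb (q^2) + 1 - emb (s * inverse q)"
    "emb (s * inverse q) = emb (inverse q ^ 2) + 1"
    "emb (s*q) = emb (s*(q - inverse q)) + emb (inverse q ^ 2) + 1"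
    unfolding g1 by (simp_all add: eadd[OF E] ediff[OF E] e1[OF E] algebra_simps)
  show ?thesis
  proof
    show "qcomm emb q (Gt k) (Wm 0)
           = emb (q - inverse q) * Wm 0 * Gt k - emb (q ^ 2) * comm Bd (Wm k)"
    proof (rule canc)
      have "emb s * (emb (q - inverse q) * Wm 0 * Gt k - emb (q ^ 2) * comm Bd (Wm k))
        = emb (s*(q - inverse q)) * (Wm 0 * Gt k) - emb (q^2) * (Wm 0 * (emb s * X)) + (emb s * X) * Wm 0"
        unfolding B1
        by (simp add: right_diff_distrib mult.assoc comb[OF E] cen2[OF E, of "Wm 0"] qq mult.commute[of "q^2"] iq)
      also have "\<dots> = emb (s*(q - inverse q)) * (Wm 0 * Gt k) - emb (q^2) * (Wm 0 * Gt k)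
          + (emb (q^2) * (Wm 0 * G k) - G k * Wm 0) + Gt k * Wm 0"
        unfolding X by (simp add: algebra_simps)
      also have "\<dots> = emb (s*q) * (Gt k * Wm 0) - emb (s * inverse q) * (Wm 0 * Gt k)"
        unfolding Rq f1(1) f1(2) by (simp add: algebra_simps)
      also have "\<dots> = emb s * qcomm emb q (Gt k) (Wm 0)"
        unfolding qcomm_def by (simp add: right_diff_distrib mult.assoc comb[OF E])
      finally show "emb s * qcomm emb q (Gt k) (Wm 0) = emb s * (emb (q - inverse q) * Wm 0 * Gt k - emb (q ^ 2) * comm Bd (Wm k))"
        by simp
    qed
  next
    show "qcomm emb q (Wp 0) (Gt k)
           = emb (q - inverse q) * Wp 0 * Gt k + comm Bd (Wp k)"
    proof (rule canc)
      have "emb s * (emb (q - inverse q) * Wp 0 * Gt k + comm Bd (Wp k))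
        = emb (s*(q - inverse q)) * (Wp 0 * Gt k) + emb (inverse q ^ 2) * (Wp 0 * (emb s * Y)) - (emb s * Y) * Wp 0"
        unfolding B2
        by (simp add: right_diff_distrib distrib_left mult.assoc comb[OF E] cen2[OF E, of "Wp 0"] mult.commute[of s] iq)
      also have "\<dots> = emb (s*(q - inverse q)) * (Wp 0 * Gt k) + emb (inverse q ^ 2) * (Wp 0 * Gt k)
          + (G k * Wp 0 - emb (inverse q ^ 2) * (Wp 0 * G k)) - Gt k * Wp 0"
        unfolding Y by (simp add: algebra_simps)
      also have "\<dots> = emb (s*q) * (Wp 0 * Gt k) - emb (s * inverse q) * (Gt k * Wp 0)"
        unfolding Rq2 f1(3) f1(4) by (simp add: algebra_simps)
      also have "\<dots> = emb s * qcomm emb q (Wp 0) (Gt k)"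
        unfolding qcomm_def by (simp add: right_diff_distrib mult.assoc comb[OF E])
      finally show "emb s * qcomm emb q (Wp 0) (Gt k) = emb s * (emb (q - inverse q) * Wp 0 * Gt k + comm Bd (Wp k))"
        by simp
    qed
  qed
qed

end
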